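(* Let $R$ be a commutative ring, $n\ge 1$, $I$ an $n$-absorbing ideal of $R$, and $k$ an integer with $0\le k\le n$. Suppose that for every family $I_1,\dots,I_{n+1}$ of u-ideals of $R$ such that $I_1\cdots I_{n+1}\subseteq I$ and at least $k+1$ of the $I_j$ are principal ideals, $I$ contains the product of some $n$ of the $I_j$'s. Then the same holds with $k+1$ replaced by $k$: for every family $I_1,\dots,I_{n+1}$ of u-ideals of $R$ such that $I_1\cdots I_{n+1}\subseteq I$ and at least $k$ of the $I_j$ are principal, $I$ contains the product of some $n$ of the $I_j$'s.
   Context: All rings are commutative with identity $1\neq 0$. An ideal $I$ of $R$ is $n$-absorbing if whenever $x_1,\dots,x_{n+1}\in R$ and $x_1x_2\cdots x_{n+1}\in I$, the product of some $n$ of the $x_i$'s lies in $I$. An ideal $J$ of $R$ is a u-ideal if whenever $J\subseteq J_1\cup\cdots\cup J_m$ for finitely many ideals $J_1,\dots,J_m$ of $R$, then $J\subseteq J_i$ for some $i$. *)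

theory Defs
  imports "HOL-Algebra.Ideal_Product"
begin

definition n_absorbing :: "('a, 'b) ring_scheme \<Rightarrow> nat \<Rightarrow> 'a set \<Rightarrow> bool" where
  "n_absorbing R n I \<longleftrightarrow> ideal I R \<and>
     (\<forall>x :: nat \<Rightarrow> 'a. x ` {..n} \<subseteq> carrier R \<longrightarrow> finprod R x {..n} \<in> I \<longrightarrow>
        (\<exists>i\<le>n. finprod R x ({..n} - {i}) \<in> I))"

definition u_ideal :: "('a, 'b) ring_scheme \<Rightarrow> 'a set \<Rightarrow> bool" where
  "u_ideal R J \<longleftrightarrow> ideal J R \<and>
     (\<forall>Js. finite Js \<longrightarrow> (\<forall>J'\<in>Js. ideal J' R) \<longrightarrow> J \<subseteq> \<Union>Js \<longrightarrow> (\<exists>J'\<in>Js. J \<subseteq> J'))"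

definition ideals_prod :: "('a, 'b) ring_scheme \<Rightarrow> (nat \<Rightarrow> 'a set) \<Rightarrow> nat list \<Rightarrow> 'a set" where
  "ideals_prod R Is js = foldr (\<lambda>j acc. Is j \<cdot>\<^bsub>R\<^esub> acc) js (carrier R)"

end

theory Submission
  imports Defs
begin

lemma ideal_prod_mono':
  assumes "I \<subseteq> I'" "J \<subseteq> J'"
  shows "I \<cdot>\<^bsub>R\<^esub> J \<subseteq> I' \<cdot>\<^bsub>R\<^esub> J'"
proof
  fix s assume "s \<in> I \<cdot>\<^bsub>R\<^esub> J" thus "s \<in> I' \<cdot>\<^bsub>R\<^esub> J'"
    by (induct s rule: ideal_prod.induct) (use assms in \<open>auto intro: ideal_prod.intros\<close>)
qed

lemma ideal_prod_le:
  assumes "ideal K R" "\<And>i j. i \<in> I \<Longrightarrow> j \<in> J \<Longrightarrow> i \<otimes>\<^bsub>R\<^esub> j \<in> K"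
  shows "I \<cdot>\<^bsub>R\<^esub> J \<subseteq> K"
proof
  fix s assume "s \<in> I \<cdot>\<^bsub>R\<^esub> J" thus "s \<in> K"
    by (induct s rule: ideal_prod.induct)
       (auto simp: assms additive_subgroup.a_closed ideal.axioms(1))
qed

lemma ideals_prod_mono:
  assumes "\<And>l. l \<in> set js \<Longrightarrow> A l \<subseteq> B l"
  shows "ideals_prod R A js \<subseteq> ideals_prod R B js"
  using assms
proof (induct js)
  case Nil show ?case by (simp add: ideals_prod_def)
next
  case (Cons a js)
  have h1: "A a \<subseteq> B a" using Cons.prems by simp
  have h2: "ideals_prod R A js \<subseteq> ideals_prod R B js" using Cons by simp
  have "A a \<cdot>\<^bsub>R\<^esub> ideals_prod R A js \<subseteq> B a \<cdot>\<^bsub>R\<^esub> ideals_prod R B js"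
    using h1 h2 by (rule ideal_prod_mono')
  thus ?case by (simp add: ideals_prod_def)
qed

lemma ideals_prod_cong:
  "(\<And>l. l \<in> set js \<Longrightarrow> A l = B l) \<Longrightarrow> ideals_prod R A js = ideals_prod R B js"
  by (induct js) (auto simp: ideals_prod_def)

lemma (in cring) ideals_prod_ideal:
  "(\<And>l. l \<in> set js \<Longrightarrow> ideal (A l) R) \<Longrightarrow> ideal (ideals_prod R A js) R"
  by (induct js) (auto simp: ideals_prod_def oneideal ideal_prod_is_ideal)

lemma (in cring) ideals_prod_extract:
  assumes "distinct js" "j \<in> set js" "\<And>l. l \<in> set js \<Longrightarrow> ideal (A l) R"
  shows "ideals_prod R A js = A j \<cdot> ideals_prod R A (filter (\<lambda>l. l \<noteq> j) js)"
  using assms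
proof (induct js)
  case Nil thus ?case by simp
next
  case (Cons a js)
  show ?case
  proof (cases "a = j")
    case True
    with Cons.prems have "filter (\<lambda>l. l \<noteq> j) js = js"
      by (auto simp: filter_id_conv)
    with True show ?thesis by (simp add: ideals_prod_def)
  next
    case False
    have ih: "ideals_prod R A js = A j \<cdot> ideals_prod R A (filter (\<lambda>l. l \<noteq> j) js)"
      using Cons False by auto
    have ia: "ideal (A a) R" and ij: "ideal (A j) R"
      using Cons.prems by auto
    have ip: "ideal (ideals_prod R A (filter (\<lambda>l. l \<noteq> j) js)) R"
      using Cons.prems by (intro ideals_prod_ideal) auto
    have "ideals_prod R A (a # js) = A a \<cdot> (A j \<cdot> ideals_prod R A (filter (\<lambda>l. l \<noteq> j) js))"
      using ih by (simp add: ideals_prod_def)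
    also have "\<dots> = (A a \<cdot> A j) \<cdot> ideals_prod R A (filter (\<lambda>l. l \<noteq> j) js)"
      using ia ij ip by (simp add: ideal_prod_assoc)
    also have "\<dots> = (A j \<cdot> A a) \<cdot> ideals_prod R A (filter (\<lambda>l. l \<noteq> j) js)"
      using ia ij by (simp add: ideal_prod_commute)
    also have "\<dots> = A j \<cdot> (A a \<cdot> ideals_prod R A (filter (\<lambda>l. l \<noteq> j) js))"
      using ia ij ip by (simp add: ideal_prod_assoc)
    also have "\<dots> = A j \<cdot> ideals_prod R A (filter (\<lambda>l. l \<noteq> j) (a # js))"
      using False by (simp add: ideals_prod_def)
    finally show ?thesis .
  qed
qed

lemma (in cring) pidl_u_ideal:
  assumes "x \<in> carrier R"
  shows "u_ideal R (PIdl x)"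
  unfolding u_ideal_def
proof (intro conjI allI impI)
  show "ideal (PIdl x) R" using assms by (rule cgenideal_ideal)
  fix Js :: "'a set set"
  assume js: "\<forall>J'\<in>Js. ideal J' R" and "PIdl x \<subseteq> \<Union>Js"
  moreover have "x \<in> PIdl x" using assms by (rule cgenideal_self)
  ultimately obtain J' where "J' \<in> Js" "x \<in> J'" by blast
  moreover have "PIdl x \<subseteq> J'" using calculation js by (intro cgenideal_minimal) auto
  ultimately show "\<exists>J'\<in>Js. PIdl x \<subseteq> J'" by blast
qed

lemma (in cring) colon_ideal:
  assumes "ideal I R" "P \<subseteq> carrier R"
  shows "ideal {y \<in> carrier R. \<forall>p\<in>P. y \<otimes> p \<in> I} R"
proof (rule idealI)
  show "ring R" by (rule ring_axioms)
  show "subgroup {y \<in> carrier R. \<forall>p\<in>P. y \<otimes> p \<in> I} (add_monoid R)"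
    apply (rule add.subgroupI)
    using assms
       apply (auto simp: a_inv_def[symmetric] l_minus l_distr subsetD additive_subgroup.a_closed ideal.axioms(1) additive_subgroup.a_inv_closed)
    apply (metis additive_subgroup.zero_closed ideal.axioms(1) l_null subsetD zero_closed)
    done
next
  fix a x assume a: "a \<in> {y \<in> carrier R. \<forall>p\<in>P. y \<otimes> p \<in> I}" and x: "x \<in> carrier R"
  show "x \<otimes> a \<in> {y \<in> carrier R. \<forall>p\<in>P. y \<otimes> p \<in> I}"
    using a x assms by (auto simp: m_assoc ideal.I_l_closed)
  show "a \<otimes> x \<in> {y \<in> carrier R. \<forall>p\<in>P. y \<otimes> p \<in> I}"
  proof (safe)
    show "a \<otimes> x \<in> carrier R" using a x by auto
    fix p assume p: "p \<in> P"
    have "a \<otimes> x \<otimes> p = x \<otimes> (a \<otimes> p)"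
      using a x p assms(2) by (auto simp: m_ac)
    thus "a \<otimes> x \<otimes> p \<in> I" using a x p assms(1) by (auto simp: ideal.I_l_closed)
  qed
qed

theorem lemma5:
  fixes R :: "('a, 'b) ring_scheme" and n k :: nat and I :: "'a set"
  assumes "cring R"
    and "n \<ge> 1"
    and "n_absorbing R n I"
    and "k \<le> n"
    and "\<forall>Is :: nat \<Rightarrow> 'a set.
           (\<forall>j\<le>n. u_ideal R (Is j)) \<longrightarrow>
           ideals_prod R Is [0..<Suc n] \<subseteq> I \<longrightarrow>
           card {j. j \<le> n \<and> principalideal (Is j) R} \<ge> k + 1 \<longrightarrow>
           (\<exists>i\<le>n. ideals_prod R Is (filter (\<lambda>j. j \<noteq> i) [0..<Suc n]) \<subseteq> I)"
  shows "\<forall>Is :: nat \<Rightarrow> 'a set.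
           (\<forall>j\<le>n. u_ideal R (Is j)) \<longrightarrow>
           ideals_prod R Is [0..<Suc n] \<subseteq> I \<longrightarrow>
           card {j. j \<le> n \<and> principalideal (Is j) R} \<ge> k \<longrightarrow>
           (\<exists>i\<le>n. ideals_prod R Is (filter (\<lambda>j. j \<noteq> i) [0..<Suc n]) \<subseteq> I)"
proof (intro allI impI)
  interpret cring R by fact
  have II: "ideal I R" using assms(3) by (simp add: n_absorbing_def)
  fix Is :: "nat \<Rightarrow> 'a set"
  assume U: "\<forall>j\<le>n. u_ideal R (Is j)" and P: "ideals_prod R Is [0..<Suc n] \<subseteq> I"
    and C: "card {j. j \<le> n \<and> principalideal (Is j) R} \<ge> k"
  define L where "L = [0..<Suc n]"
  have setL: "set L = {..n}" and dL: "distinct L" unfolding L_def by auto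
  have idl: "\<And>l. l \<le> n \<Longrightarrow> ideal (Is l) R" using U by (simp add: u_ideal_def)
  show "\<exists>i\<le>n. ideals_prod R Is (filter (\<lambda>j. j \<noteq> i) [0..<Suc n]) \<subseteq> I"
  proof (cases "card {j. j \<le> n \<and> principalideal (Is j) R} \<ge> k + 1")
    case True
    have H: "(\<forall>j\<le>n. u_ideal R (Is j)) \<longrightarrow>
           ideals_prod R Is [0..<Suc n] \<subseteq> I \<longrightarrow>
           card {j. j \<le> n \<and> principalideal (Is j) R} \<ge> k + 1 \<longrightarrow>
           (\<exists>i\<le>n. ideals_prod R Is (filter (\<lambda>j. j \<noteq> i) [0..<Suc n]) \<subseteq> I)"
      using assms(5) by (rule spec)
    show ?thesis using H U P True by blast
  next
    case False
    have "{j. j \<le> n \<and> principalideal (Is j) R} \<noteq> {..n}"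
      using False assms(4) by auto
    then obtain j where j: "j \<le> n" "\<not> principalideal (Is j) R" by auto
    show ?thesis
    proof (rule ccontr)
      assume N: "\<not> (\<exists>i\<le>n. ideals_prod R Is (filter (\<lambda>j. j \<noteq> i) [0..<Suc n]) \<subseteq> I)"
      define Pi where "Pi i = ideals_prod R Is (filter (\<lambda>l. l \<noteq> j) (filter (\<lambda>l. l \<noteq> i) L))" for i
      define Col where "Col i = {y \<in> carrier R. \<forall>p\<in>Pi i. y \<otimes>\<^bsub>R\<^esub> p \<in> I}" for i
      have Piid: "ideal (Pi i) R" for i unfolding Pi_def
        by (rule ideals_prod_ideal) (auto simp: setL idl)
      have Colid: "ideal (Col i) R" for i
      proof -
        have "Pi i \<subseteq> carrier R" using ideal.Icarr[OF Piid[of i]] by blast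
        thus ?thesis unfolding Col_def by (rule colon_ideal[OF II])
      qed
      have cov: "Is j \<subseteq> \<Union> (Col ` ({..n} - {j}))"
      proof
        fix x assume x: "x \<in> Is j"
        have xc: "x \<in> carrier R" using ideal.Icarr[OF idl[OF j(1)] x] .
        define Is' where "Is' = Is(j := PIdl\<^bsub>R\<^esub> x)"
        have U': "\<forall>l\<le>n. u_ideal R (Is' l)" using U pidl_u_ideal[OF xc] by (simp add: Is'_def)
        have sub: "PIdl\<^bsub>R\<^esub> x \<subseteq> Is j" using cgenideal_minimal[OF idl[OF j(1)] x] .
        have "ideals_prod R Is' [0..<Suc n] \<subseteq> ideals_prod R Is [0..<Suc n]"
          by (rule ideals_prod_mono) (use sub in \<open>auto simp: Is'_def\<close>)
        with P have P': "ideals_prod R Is' [0..<Suc n] \<subseteq> I" by blast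
        have eqs: "{l. l \<le> n \<and> principalideal (Is' l) R}
             = insert j {l. l \<le> n \<and> principalideal (Is l) R}"
          using j cgenideal_is_principalideal[OF xc] by (auto simp: Is'_def)
        have "card {l. l \<le> n \<and> principalideal (Is' l) R} = Suc (card {l. l \<le> n \<and> principalideal (Is l) R})"
          unfolding eqs using j by (subst card_insert_disjoint) (auto intro: finite_subset[of _ "{..n}"])
        with C have "card {l. l \<le> n \<and> principalideal (Is' l) R} \<ge> k + 1" by simp
        note K = this
        have H': "(\<forall>j\<le>n. u_ideal R (Is' j)) \<longrightarrow>
           ideals_prod R Is' [0..<Suc n] \<subseteq> I \<longrightarrow>
           card {j. j \<le> n \<and> principalideal (Is' j) R} \<ge> k + 1 \<longrightarrow>
           (\<exists>i\<le>n. ideals_prod R Is' (filter (\<lambda>j. j \<noteq> i) [0..<Suc n]) \<subseteq> I)"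
          using assms(5) by (rule spec)
        obtain i where i: "i \<le> n"
          "ideals_prod R Is' (filter (\<lambda>l. l \<noteq> i) [0..<Suc n]) \<subseteq> I"
          using H' U' P' K by blast
        show "x \<in> \<Union> (Col ` ({..n} - {j}))"
        proof (cases "i = j")
          case True
          have "ideals_prod R Is' (filter (\<lambda>l. l \<noteq> i) [0..<Suc n]) = ideals_prod R Is (filter (\<lambda>l. l \<noteq> i) [0..<Suc n])"
          proof (rule ideals_prod_cong)
            fix l assume "l \<in> set (filter (\<lambda>l. l \<noteq> i) [0..<Suc n])"
            hence "l \<noteq> j" using True by (auto simp only: set_filter mem_Collect_eq)
            thus "Is' l = Is l" by (simp add: Is'_def)
          qed
          with i N show ?thesis by auto
        next
          case False
          have idl': "\<And>l. l \<in> set (filter (\<lambda>l. l \<noteq> i) L) \<Longrightarrow> ideal (Is' l) R"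
            using U' by (auto simp: setL u_ideal_def)
          have "ideals_prod R Is' (filter (\<lambda>l. l \<noteq> i) L)
             = Is' j \<cdot>\<^bsub>R\<^esub> ideals_prod R Is' (filter (\<lambda>l. l \<noteq> j) (filter (\<lambda>l. l \<noteq> i) L))"
            by (rule ideals_prod_extract) (use dL setL False j idl' in auto)
          also have "ideals_prod R Is' (filter (\<lambda>l. l \<noteq> j) (filter (\<lambda>l. l \<noteq> i) L)) = Pi i"
            unfolding Pi_def by (rule ideals_prod_cong) (simp add: Is'_def)
          finally have E0: "ideals_prod R Is' (filter (\<lambda>l. l \<noteq> i) L) = Is' j \<cdot>\<^bsub>R\<^esub> Pi i" .
          have Is'j: "Is' j = PIdl\<^bsub>R\<^esub> x" by (simp add: Is'_def)
          have E: "ideals_prod R Is' (filter (\<lambda>l. l \<noteq> i) L) = (PIdl\<^bsub>R\<^esub> x) \<cdot>\<^bsub>R\<^esub> Pi i"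
            using E0 unfolding Is'j .
          have "x \<in> Col i"
            unfolding Col_def
          proof (safe intro!: xc)
            fix p assume "p \<in> Pi i"
            hence "x \<otimes>\<^bsub>R\<^esub> p \<in> (PIdl\<^bsub>R\<^esub> x) \<cdot>\<^bsub>R\<^esub> Pi i" by (intro ideal_prod.prod cgenideal_self xc)
            thus "x \<otimes>\<^bsub>R\<^esub> p \<in> I" using E i(2) by (auto simp: L_def)
          qed
          thus ?thesis using False i(1) by auto
        qed
      qed
      have uj: "u_ideal R (Is j)" using U j(1) by blast
      have fin: "finite (Col ` ({..n} - {j}))" by simp
      have ids: "\<forall>J'\<in>Col ` ({..n} - {j}). ideal J' R" using Colid by blast
      have "\<exists>J'\<in>Col ` ({..n} - {j}). Is j \<subseteq> J'"
        using uj fin ids cov unfolding u_ideal_def by (elim conjE allE[of _ "Col ` ({..n} - {j})"]) (erule impE, assumption)+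
      then obtain i where i: "i \<le> n" "i \<noteq> j" "Is j \<subseteq> Col i" by auto
      have "ideals_prod R Is (filter (\<lambda>l. l \<noteq> i) L) = Is j \<cdot>\<^bsub>R\<^esub> Pi i"
        unfolding Pi_def by (rule ideals_prod_extract) (use dL setL i j idl in auto)
      also have "\<dots> \<subseteq> I"
        by (rule ideal_prod_le[OF II]) (use i(3) in \<open>auto simp: Col_def\<close>)
      finally show False using N i(1) by (auto simp: L_def)
    qed
  qed
qed
end
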